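(* Let $n\mid(q-1)$, let $r\ge1$, $\delta\ge2$ be integers with $(r+\delta-1)\mid n$, put $\nu=n/(r+\delta-1)$, and let $b$ be a positive integer with $\gcd(b,n)=1$. Let $B=\{1,\alpha^{b},\alpha^{2b},\dots,\alpha^{(\delta-2)b}\}$ and $$A=\{\alpha^{t},\alpha^{t+b},\dots,\alpha^{t+(\ell(r+\delta-1)+i)b}\}\cup\{\alpha^{t+((\ell+e)(r+\delta-1)+j)b}: e=1,2,\dots,\nu-\ell-1\},$$ where $0\le t\le n-1$, $0\le i\le r-1$, and $\ell,j$ satisfy either ($0\le\ell\le\nu-3$ and $0\le j\le i$) or ($\ell=\nu-2$ and $j=i$). Then $C_{AB}$ is an optimal cyclic $(r,\delta)$-LRC of length $n$ over $\mathbb{F}_q$ with dimension $(\nu-\ell)r-i$ and minimum distance $\delta+i+\ell(r+\delta-1)$.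
   Context: Let $q$ be a prime power and $n\mid(q-1)$, so the set $R_n$ of all $n$-th roots of unity lies in $\mathbb{F}_q$; let $\alpha\in\mathbb{F}_q$ be a primitive $n$-th root of unity. For $A,B\subseteq R_n$, $AB=\{\beta\gamma:\beta\in A,\gamma\in B\}$, and for $Z\subseteq R_n$, $C_Z$ denotes the cyclic code of length $n$ over $\mathbb{F}_q$ with complete defining set $Z$, i.e. the ideal generated by $\prod_{\beta\in Z}(x-\beta)$ in $\mathbb{F}_q[x]/(x^n-1)$, identified with a subspace of $\mathbb{F}_q^n$; it has dimension $n-|Z|$. Locality: for a linear code $C\subseteq\mathbb{F}_q^n$ and integers $r\ge1$, $\delta\ge2$, the $i$-th coordinate has $(r,\delta)$-locality if there is $S_i\subseteq\{1,\dots,n\}$ with $i\in S_i$, $|S_i|\le r+\delta-1$ such that the punctured code $C|_{S_i}$ has minimum distance at least $\delta$; $C$ is an $(r,\delta)$-LRC if every coordinate has $(r,\delta)$-locality. An $[n,k,d]$ $(r,\delta)$-LRC is optimal if $d=n-k-(\lceil k/r\rceil-1)(\delta-1)+1$ (this quantity is always an upper bound on $d$). *)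

theory Defs
  imports "HOL-Computational_Algebra.Polynomial" "HOL-Library.Function_Algebras"
begin

text \<open>Vectors of length n over a field are modelled as functions nat => 'a;
  coordinate k (0 <= k < n) corresponds to coordinate k+1 of the paper.
  All codewords considered vanish outside {0..<n}.\<close>

definition primitive_root_of_unity :: "nat \<Rightarrow> 'a::field \<Rightarrow> bool" where
  "primitive_root_of_unity n a \<longleftrightarrow> 0 < n \<and> a ^ n = 1 \<and> (\<forall>k. 0 < k \<and> k < n \<longrightarrow> a ^ k \<noteq> 1)"

definition roots_of_unity :: "nat \<Rightarrow> 'a::field set" where
  "roots_of_unity n = {x. x ^ n = 1}"

definition set_prod :: "'a::times set \<Rightarrow> 'a set \<Rightarrow> 'a set" where
  "set_prod A B = {x * y | x y. x \<in> A \<and> y \<in> B}"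

text \<open>Cyclic code with complete defining set Z: the ideal generated by
  prod_{beta in Z} (x - beta) in F[x]/(x^n - 1), a polynomial of degree < n
  being identified with its coefficient vector.\<close>
definition cyclic_code :: "nat \<Rightarrow> 'a::field set \<Rightarrow> (nat \<Rightarrow> 'a) set" where
  "cyclic_code n Z =
     {(\<lambda>k. coeff ((f * (\<Prod>\<beta>\<in>Z. [:- \<beta>, 1:])) mod (monom 1 n - 1)) k) | f. True}"

definition vscale :: "'a::field \<Rightarrow> (nat \<Rightarrow> 'a) \<Rightarrow> (nat \<Rightarrow> 'a)" where
  "vscale c v = (\<lambda>k. c * v k)"

definition code_dim :: "(nat \<Rightarrow> 'a::field) set \<Rightarrow> nat" where
  "code_dim C = vector_space.dim vscale C"

definition hamming_dist :: "nat \<Rightarrow> (nat \<Rightarrow> 'a) \<Rightarrow> (nat \<Rightarrow> 'a) \<Rightarrow> nat" where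
  "hamming_dist n x y = card {k. k < n \<and> x k \<noteq> y k}"

definition min_dist :: "nat \<Rightarrow> (nat \<Rightarrow> 'a) set \<Rightarrow> nat" where
  "min_dist n C = Min {hamming_dist n x y | x y. x \<in> C \<and> y \<in> C \<and> x \<noteq> y}"

definition puncture :: "nat set \<Rightarrow> (nat \<Rightarrow> 'a::zero) set \<Rightarrow> (nat \<Rightarrow> 'a) set" where
  "puncture S C = {(\<lambda>k. if k \<in> S then c k else 0) | c. c \<in> C}"

definition min_dist_ge :: "nat \<Rightarrow> (nat \<Rightarrow> 'a) set \<Rightarrow> nat \<Rightarrow> bool" where
  "min_dist_ge n C \<delta> \<longleftrightarrow> (\<forall>x\<in>C. \<forall>y\<in>C. x \<noteq> y \<longrightarrow> \<delta> \<le> hamming_dist n x y)"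

definition has_locality :: "nat \<Rightarrow> (nat \<Rightarrow> 'a::zero) set \<Rightarrow> nat \<Rightarrow> nat \<Rightarrow> nat \<Rightarrow> bool" where
  "has_locality n C r \<delta> k \<longleftrightarrow>
     (\<exists>S. S \<subseteq> {0..<n} \<and> k \<in> S \<and> card S \<le> r + \<delta> - 1 \<and> min_dist_ge n (puncture S C) \<delta>)"

definition is_LRC :: "nat \<Rightarrow> (nat \<Rightarrow> 'a::zero) set \<Rightarrow> nat \<Rightarrow> nat \<Rightarrow> bool" where
  "is_LRC n C r \<delta> \<longleftrightarrow> (\<forall>k<n. has_locality n C r \<delta> k)"

definition optimal_LRC :: "nat \<Rightarrow> (nat \<Rightarrow> 'a::field) set \<Rightarrow> nat \<Rightarrow> nat \<Rightarrow> bool" where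
  "optimal_LRC n C r \<delta> \<longleftrightarrow> is_LRC n C r \<delta> \<and>
     int (min_dist n C) = int n - int (code_dim C)
        - (\<lceil>real (code_dim C) / real r\<rceil> - 1) * (int \<delta> - 1) + 1"

end

theory Submission
  imports Defs "HOL-Library.FuncSet" "HOL-Number_Theory.Cong"
begin

definition ev :: "nat \<Rightarrow> (nat \<Rightarrow> 'a::field) \<Rightarrow> 'a \<Rightarrow> 'a" where
  "ev n v z = (\<Sum>k<n. v k * z ^ k)"

definition Cp :: "nat \<Rightarrow> 'a::field set \<Rightarrow> (nat \<Rightarrow> 'a) set" where
  "Cp n Z = {v. (\<forall>k\<ge>n. v k = 0) \<and> (\<forall>z\<in>Z. ev n v z = 0)}"

lemma poly_lt_sum:
  fixes p :: "'a::field poly"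
  assumes "degree p < n"
  shows "poly p z = (\<Sum>k<n. coeff p k * z ^ k)"
proof -
  have "poly p z = (\<Sum>k\<le>degree p. coeff p k * z ^ k)" by (rule poly_altdef)
  also have "\<dots> = (\<Sum>k<n. coeff p k * z ^ k)"
    by (rule sum.mono_neutral_left) (use assms coeff_eq_0 in \<open>auto intro: le_degree\<close>)
  finally show ?thesis .
qed

lemma poly_of_vec:
  fixes v :: "nat \<Rightarrow> 'a::field"
  assumes "\<forall>k\<ge>n. v k = 0"
  shows "coeff (\<Sum>k<n. monom (v k) k) = v"
proof
  fix i show "coeff (\<Sum>k<n. monom (v k) k) i = v i"
    using assms by (cases "i < n") (auto simp: coeff_sum)
qed

lemma prod_roots_dvd:
  fixes p :: "'a::field poly"
  assumes "finite Z" "\<forall>z\<in>Z. poly p z = 0"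
  shows "(\<Prod>z\<in>Z. [:-z,1:]) dvd p"
  using assms
proof (induction Z arbitrary: p rule: finite_induct)
  case empty then show ?case by simp
next
  case (insert z Z)
  have "(\<Prod>z\<in>Z. [:-z,1:]) dvd p" using insert.IH insert.prems by auto
  then obtain h where h: "p = (\<Prod>z\<in>Z. [:-z,1:]) * h" by auto
  have "poly (\<Prod>z\<in>Z. [:-z,1:]) z \<noteq> 0"
    using insert(1,2) by (auto simp: poly_prod)
  moreover have "poly p z = 0" using insert by auto
  ultimately have "poly h z = 0" using h by simp
  then obtain g where g: "h = [:-z,1:] * g" using poly_eq_0_iff_dvd by blast
  have "p = ([:-z,1:] * (\<Prod>z\<in>Z. [:-z,1:])) * g" using h g by (metis mult.assoc mult.commute)
  then show ?case using insert(1,2) by (simp add: dvd_def)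
qed

lemma degree_G:
  fixes Z :: "'a::field set"
  assumes "finite Z"
  shows "degree (\<Prod>z\<in>Z. [:-z,1:]) = card Z" "(\<Prod>z\<in>Z. [:-z,1:]) \<noteq> 0"
  using assms by (auto simp: degree_prod_eq_sum_degree)

lemma degree_Xn: "0 < n \<Longrightarrow> degree (monom (1::'a::field) n - 1) = n"
proof -
  assume n: "0 < n"
  have "degree (monom (1::'a) n - 1) \<le> n" by (rule degree_diff_le) (auto simp: degree_monom_le)
  moreover have "coeff (monom (1::'a) n - 1) n \<noteq> 0" using n by simp
  ultimately show ?thesis using le_degree by (metis antisym)
qed

lemma sum_fun_apply: "(\<Sum>x\<in>A. g x) (k::'b) = (\<Sum>x\<in>A. (g x k :: 'c::comm_monoid_add))"
  by (induction A rule: infinite_finite_induct) auto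

lemma cyc_eq:
  fixes Z :: "'a::field set"
  assumes n: "0 < n" and fin: "finite Z" and rt: "\<forall>z\<in>Z. z ^ n = 1"
  shows "cyclic_code n Z = Cp n Z"
proof
  let ?G = "\<Prod>z\<in>Z. [:-z,1:]" and ?X = "monom (1::'a) n - 1"
  have dX: "degree ?X = n" using degree_Xn[OF n] .
  have X0: "?X \<noteq> 0" using dX n by auto
  show "cyclic_code n Z \<subseteq> Cp n Z"
  proof
    fix v assume "v \<in> cyclic_code n Z"
    then obtain f where v: "v = coeff ((f * ?G) mod ?X)" unfolding cyclic_code_def by auto
    define p where "p = (f * ?G) mod ?X"
    have dp: "degree p < n" using degree_mod_less[OF X0, of "f * ?G"] dX n unfolding p_def
      by auto
    have "\<forall>k\<ge>n. v k = 0"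
    proof (intro allI impI)
      fix k assume "n \<le> k" then have "degree p < k" using dp by linarith
      then show "v k = 0" using v p_def coeff_eq_0 by metis
    qed
    moreover have "\<forall>z\<in>Z. ev n v z = 0"
    proof
      fix z assume z: "z \<in> Z"
      have "f * ?G = (f * ?G) div ?X * ?X + p" unfolding p_def by (rule div_mult_mod_eq[symmetric])
      then have "poly (f * ?G) z = poly ((f * ?G) div ?X) z * poly ?X z + poly p z"
        by (metis poly_add poly_mult)
      moreover have "poly ?X z = 0" using rt z by (simp add: poly_monom)
      moreover have "poly ?G z = 0" using z fin by (auto simp: poly_prod)
      ultimately have "poly p z = 0" by simp
      then show "ev n v z = 0" using poly_lt_sum[OF dp] v p_def ev_def by metis
    qed
    ultimately show "v \<in> Cp n Z" unfolding Cp_def by auto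
  qed
  show "Cp n Z \<subseteq> cyclic_code n Z"
  proof
    fix v assume "v \<in> Cp n Z"
    then have v0: "\<forall>k\<ge>n. v k = 0" and vz: "\<forall>z\<in>Z. ev n v z = 0" unfolding Cp_def by auto
    define p where "p = (\<Sum>k<n. monom (v k) k)"
    have cp: "coeff p = v" using poly_of_vec[OF v0] p_def by simp
    have dp: "degree p < n"
    proof -
      have "degree p \<le> n - 1" unfolding p_def
        by (rule degree_sum_le) (auto intro: order.trans[OF degree_monom_le])
      then show ?thesis using n by auto
    qed
    have "\<forall>z\<in>Z. poly p z = 0" using vz poly_lt_sum[OF dp] cp unfolding ev_def by auto
    then have "?G dvd p" using prod_roots_dvd fin by blast
    then obtain f where f: "p = f * ?G" by (metis dvd_def mult.commute)
    have "p mod ?X = p" by (rule mod_poly_less) (simp only: dX dp)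
    then have "v = coeff ((f * ?G) mod ?X)" using cp f by simp
    then show "v \<in> cyclic_code n Z" unfolding cyclic_code_def by auto
  qed
qed

lemma vs_vscale: "vector_space (vscale :: 'a::field \<Rightarrow> (nat \<Rightarrow> 'a) \<Rightarrow> _)"
  by unfold_locales (auto simp: vscale_def fun_eq_iff algebra_simps)

lemma mod_vscale: "module (vscale :: 'a::field \<Rightarrow> (nat \<Rightarrow> 'a) \<Rightarrow> _)"
  by unfold_locales (auto simp: vscale_def fun_eq_iff algebra_simps)

lemma coeff_lincomb:
  fixes G :: "'a::field poly"
  shows "(\<Sum>s<N. vscale (w s) (coeff (monom 1 s * G))) = coeff ((\<Sum>s<N. monom (w s) s) * G)"
proof
  fix k
  have "(\<Sum>s<N. vscale (w s) (coeff (monom 1 s * G))) k = (\<Sum>s<N. w s * coeff (monom 1 s * G) k)"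
    by (simp add: sum_fun_apply vscale_def)
  also have "\<dots> = coeff (\<Sum>s<N. smult (w s) (monom 1 s * G)) k" by (simp add: coeff_sum)
  also have "(\<Sum>s<N. smult (w s) (monom 1 s * G)) = (\<Sum>s<N. monom (w s) s) * G"
  proof -
    have "\<And>s. smult (w s) (monom 1 s * G) = monom (w s) s * G"
      by (simp add: mult_smult_left[symmetric] smult_monom)
    then show ?thesis by (simp add: sum_distrib_right)
  qed
  finally show "(\<Sum>s<N. vscale (w s) (coeff (monom 1 s * G))) k = coeff ((\<Sum>s<N. monom (w s) s) * G) k" .
qed

lemma dim_Cp:
  fixes Z :: "'a::field set"
  assumes n: "0 < n" and fin: "finite Z" and rt: "\<forall>z\<in>Z. z ^ n = 1" and cZ: "card Z \<le> n"
  shows "code_dim (Cp n Z) = n - card Z"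
proof -
  let ?G = "\<Prod>z\<in>Z. [:-z,1:]" and ?X = "monom (1::'a) n - 1"
  define N where "N = n - card Z"
  define bv where "bv s = coeff (monom 1 s * ?G)" for s
  have dG: "degree ?G = card Z" and G0: "?G \<noteq> 0" using degree_G[OF fin] by auto
  have dX: "degree ?X = n" using degree_Xn[OF n] .
  have inj: "inj_on bv {..<N}"
  proof
    fix s s' assume "bv s = bv s'"
    then have "monom 1 s * ?G = monom 1 s' * ?G" unfolding bv_def by (simp add: poly_eq_iff)
    then have "monom (1::'a) s = monom 1 s'" using G0 by simp
    then show "s = s'" by (metis coeff_monom one_neq_zero)
  qed
  have Bsub: "bv ` {..<N} \<subseteq> Cp n Z"
  proof
    fix x assume "x \<in> bv ` {..<N}"
    then obtain s where s: "s < N" "x = bv s" by auto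
    have "degree (monom (1::'a) s * ?G) = s + card Z"
      using G0 dG by (simp add: degree_mult_eq degree_monom_eq)
    then have "(monom 1 s * ?G) mod ?X = monom 1 s * ?G" using s N_def cZ dX
      by (intro mod_poly_less) auto
    then have "x \<in> cyclic_code n Z" unfolding cyclic_code_def s bv_def
      by (metis (mono_tags, lifting) mem_Collect_eq)
    then show "x \<in> Cp n Z" using cyc_eq[OF n fin rt] by simp
  qed
  have spanB: "Cp n Z \<subseteq> module.span vscale (bv ` {..<N})"
  proof
    fix v assume "v \<in> Cp n Z"
    then have "v \<in> cyclic_code n Z" using cyc_eq[OF n fin rt] by simp
    then obtain f where v: "v = coeff ((f * ?G) mod ?X)" unfolding cyclic_code_def by auto
    define p where "p = (f * ?G) mod ?X"
    have dp: "degree p < n" using degree_mod_less[OF _, of ?X "f * ?G"] dX n unfolding p_def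
      by (metis degree_0 less_nat_zero_code neq0_conv)
    have "\<forall>z\<in>Z. poly p z = 0"
    proof
      fix z assume z: "z \<in> Z"
      have "v \<in> Cp n Z" using \<open>v \<in> cyclic_code n Z\<close> cyc_eq[OF n fin rt] by simp
      then have "ev n v z = 0" using z unfolding Cp_def by auto
      then show "poly p z = 0" using poly_lt_sum[OF dp] v p_def ev_def by metis
    qed
    then have "?G dvd p" using prod_roots_dvd fin by blast
    then obtain g where g: "p = g * ?G" by (metis dvd_def mult.commute)
    have cg: "\<forall>s\<ge>N. coeff g s = 0"
    proof (cases "g = 0")
      case False
      then have "degree p = degree g + card Z" using g G0 dG by (simp add: degree_mult_eq)
      show ?thesis
      proof (intro allI impI)
        fix s assume "N \<le> s"
        then have "degree g < s" using dp N_def \<open>degree p = degree g + card Z\<close> by linarith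
        then show "coeff g s = 0" using coeff_eq_0 by metis
      qed
    qed simp
    have "g = (\<Sum>s<N. monom (coeff g s) s)"
      using poly_of_vec[of N "coeff g"] cg by (simp add: poly_eq_iff)
    then have "v = (\<Sum>s<N. vscale (coeff g s) (bv s))"
      using coeff_lincomb[of "coeff g" ?G N] v p_def g bv_def by simp
    also have "\<dots> \<in> module.span vscale (bv ` {..<N})"
      by (intro module.span_sum[OF mod_vscale] module.span_scale[OF mod_vscale]
          module.span_base[OF mod_vscale]) auto
    finally show "v \<in> module.span vscale (bv ` {..<N})" .
  qed
  have indep: "\<not> module.dependent vscale (bv ` {..<N})"
  proof
    assume dep: "module.dependent vscale (bv ` {..<N})"
    have fin': "finite (bv ` {..<N})" by simp
    have "\<exists>u. (\<exists>v\<in>bv ` {..<N}. u v \<noteq> 0) \<and> (\<Sum>v\<in>bv ` {..<N}. vscale (u v) v) = 0"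
      using module.dependent_finite[OF mod_vscale fin'] dep by (simp only:)
    then obtain u where u1: "\<exists>v\<in>bv ` {..<N}. u v \<noteq> 0"
      and u2: "(\<Sum>v\<in>bv ` {..<N}. vscale (u v) v) = 0" by (elim exE conjE)
    have "(\<Sum>s<N. vscale (u (bv s)) (bv s)) = 0"
      using u2 sum.reindex[OF inj, of "\<lambda>v. vscale (u v) v"] by simp
    then have "coeff ((\<Sum>s<N. monom (u (bv s)) s) * ?G) = 0"
      using coeff_lincomb[of "\<lambda>s. u (bv s)" ?G N] unfolding bv_def by simp
    then have "(\<Sum>s<N. monom (u (bv s)) s) * ?G = 0" by (simp add: poly_eq_iff)
    then have P0: "(\<Sum>s<N. monom (u (bv s)) s) = 0" using G0 by simp
    have "\<forall>s<N. u (bv s) = 0"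
    proof (intro allI impI)
      fix s assume "s < N"
      have "coeff (\<Sum>s<N. monom (u (bv s)) s) s = u (bv s)" using \<open>s<N\<close> by (simp add: coeff_sum)
      then show "u (bv s) = 0" using P0 by simp
    qed
    then show False using u1 by auto
  qed
  have "vector_space.dim vscale (Cp n Z) = card (bv ` {..<N})"
    by (rule vector_space.dim_unique[OF vs_vscale Bsub spanB]) (use indep in auto)
  then show ?thesis unfolding code_dim_def N_def using card_image[OF inj] N_def by simp
qed


lemma vander:
  fixes x y :: "'b \<Rightarrow> 'a::field"
  assumes fin: "finite K" and inj: "inj_on x K"
    and h: "\<forall>M<card K. (\<Sum>k\<in>K. y k * x k ^ M) = 0" and k0: "k0 \<in> K"
  shows "y k0 = 0"
proof -
  define L where "L = (\<Prod>k\<in>K-{k0}. [:-x k, 1:])"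
  have dL: "degree L = card (K - {k0})" unfolding L_def using fin
    by (subst degree_prod_eq_sum_degree) auto
  have cK: "card (K - {k0}) < card K" using fin k0 by (meson card_Diff1_less)
  have z: "poly L (x k) = 0" if "k \<in> K - {k0}" for k
    unfolding L_def poly_prod using fin that by (auto intro: prod_zero)
  have nz: "poly L (x k0) \<noteq> 0"
    unfolding L_def poly_prod using fin inj k0 by (auto simp: inj_on_def)
  have "(\<Sum>k\<in>K. y k * poly L (x k)) = (\<Sum>k\<in>K. y k * (\<Sum>M\<le>degree L. coeff L M * x k ^ M))"
    by (simp add: poly_altdef)
  also have "\<dots> = (\<Sum>M\<le>degree L. coeff L M * (\<Sum>k\<in>K. y k * x k ^ M))"
    by (simp add: sum_distrib_left sum.swap[of _ K] mult_ac)
  also have "\<dots> = 0" using h dL cK by (intro sum.neutral) auto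
  finally have s0: "(\<Sum>k\<in>K. y k * poly L (x k)) = 0" .
  have "(\<Sum>k\<in>K. y k * poly L (x k)) = y k0 * poly L (x k0) + (\<Sum>k\<in>K-{k0}. y k * poly L (x k))"
    using fin k0 by (simp add: sum.remove)
  also have "(\<Sum>k\<in>K-{k0}. y k * poly L (x k)) = 0" using z by simp
  finally show ?thesis using s0 nz by simp
qed

locale LRC =
  fixes \<alpha> :: "'a::{finite,field}" and n r \<delta> b t i l j :: nat
  assumes h\<alpha>: "primitive_root_of_unity n \<alpha>"
    and hr: "1 \<le> r" and h\<delta>: "2 \<le> \<delta>"
    and hdiv: "(r + \<delta> - 1) dvd n"
    and hgcd: "gcd b n = 1"
    and hi: "i \<le> r - 1"
    and hlj: "(l + 3 \<le> n div (r + \<delta> - 1) \<and> j \<le> i) \<or> (l + 2 = n div (r + \<delta> - 1) \<and> j = i)"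
begin

definition "R = r + \<delta> - 1"
definition "\<nu> = n div R"
definition "P M = \<alpha> ^ (t + M * b)"
definition "D = l * R + i + \<delta> - 1"
definition "S = {M. M < D} \<union> {(l + e) * R + j + u | e u. 1 \<le> e \<and> e \<le> \<nu> - l - 1 \<and> u \<le> \<delta> - 2}"
definition "cls v s p = (\<Sum>k\<in>{k\<in>{..<n}. k mod \<nu> = s}. v k * p ^ k)"

lemma n_pos: "0 < n" using h\<alpha> unfolding primitive_root_of_unity_def by auto
lemma an: "\<alpha> ^ n = 1" using h\<alpha> unfolding primitive_root_of_unity_def by auto
lemma nR: "n = \<nu> * R" using hdiv unfolding R_def \<nu>_def by simp
lemma R2: "2 \<le> R" using hr h\<delta> unfolding R_def by simp
lemma nu_l: "l + 2 \<le> \<nu>" using hlj unfolding \<nu>_def R_def by auto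
lemma ji: "j \<le> i" using hlj by auto
lemma ir: "i < r" using hi hr by simp
lemma a0: "\<alpha> \<noteq> 0" using an n_pos by (metis power_0_left less_not_refl2 zero_neq_one)

lemma apow_mod: "\<alpha> ^ x = \<alpha> ^ (x mod n)"
proof -
  have "\<alpha> ^ x = \<alpha> ^ (n * (x div n) + x mod n)" by simp
  also have "\<dots> = (\<alpha> ^ n) ^ (x div n) * \<alpha> ^ (x mod n)" by (simp only: power_add power_mult)
  finally show ?thesis using an by simp
qed

lemma apow_eq: "x mod n = y mod n \<Longrightarrow> \<alpha> ^ x = \<alpha> ^ y"
  by (metis apow_mod)

lemma apow_inj_aux: "a < n \<Longrightarrow> c < n \<Longrightarrow> a < c \<Longrightarrow> \<alpha> ^ a \<noteq> \<alpha> ^ c"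
proof
  assume h: "a < n" "c < n" "a < c" "\<alpha> ^ a = \<alpha> ^ c"
  have "\<alpha> ^ c = \<alpha> ^ a * \<alpha> ^ (c - a)" using h(3) by (simp flip: power_add)
  then have "\<alpha> ^ (c - a) = 1" using h(4) a0 by simp
  moreover have "0 < c - a" "c - a < n" using h by auto
  ultimately show False using h\<alpha> unfolding primitive_root_of_unity_def by blast
qed

lemma apow_eqD: "\<alpha> ^ x = \<alpha> ^ y \<Longrightarrow> x mod n = y mod n"
proof -
  assume h: "\<alpha> ^ x = \<alpha> ^ y"
  then have e: "\<alpha> ^ (x mod n) = \<alpha> ^ (y mod n)" by (metis apow_mod)
  have "x mod n < n" "y mod n < n" using n_pos by auto
  then show ?thesis using apow_inj_aux e by (metis linorder_neqE_nat)
qed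

lemma b_inj: "x < n \<Longrightarrow> y < n \<Longrightarrow> \<alpha> ^ (x * b) = \<alpha> ^ (y * b) \<Longrightarrow> x = y"
proof -
  assume h: "x < n" "y < n" "\<alpha> ^ (x * b) = \<alpha> ^ (y * b)"
  then have "[x * b = y * b] (mod n)" using apow_eqD unfolding cong_def by blast
  moreover have "coprime b n" using hgcd by (simp add: coprime_iff_gcd_eq_1)
  ultimately have "[x = y] (mod n)" using cong_mult_rcancel_nat by blast
  then show "x = y" using h by (simp add: cong_def)
qed

lemma P_inj: "x < n \<Longrightarrow> y < n \<Longrightarrow> P x = P y \<Longrightarrow> x = y"
proof -
  assume h: "x < n" "y < n" "P x = P y"
  then have "\<alpha> ^ t * \<alpha> ^ (x * b) = \<alpha> ^ t * \<alpha> ^ (y * b)" unfolding P_def by (simp add: power_add)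
  then have "\<alpha> ^ (x * b) = \<alpha> ^ (y * b)" using a0 by simp
  then show ?thesis using b_inj h by blast
qed

lemma P_root: "P M ^ n = 1"
  unfolding P_def by (metis an power_mult power_mult_distrib mult.commute power_one)

lemma P_pow: "P M ^ k = \<alpha> ^ ((t + M * b) * k)"
  unfolding P_def by (simp add: power_mult)

lemma decomp:
  "ev n v (P (e * R + M0)) = (\<Sum>s<\<nu>. \<alpha> ^ (R * s * b * e) * cls v s (P M0))"
proof -
  have key: "\<alpha> ^ ((t + (e * R + M0) * b) * k) = P M0 ^ k * \<alpha> ^ (R * (k mod \<nu>) * b * e)" for k
  proof -
    have "(e * R * b * k) mod n = (R * (k mod \<nu>) * b * e) mod n"
    proof -
      define a where "a = k mod \<nu>"
      define c where "c = k div \<nu>"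
      have "k = a + \<nu> * c" unfolding a_def c_def by simp
      then have "e * R * b * k = e * R * b * (a + \<nu> * c)" by simp
      also have "\<dots> = R * a * b * e + (\<nu> * R) * (e * b * c)"
        by (simp add: algebra_simps)
      finally have "e * R * b * k = R * (k mod \<nu>) * b * e + (\<nu> * R) * (e * b * (k div \<nu>))"
        unfolding a_def c_def .
      then have "e * R * b * k = R * (k mod \<nu>) * b * e + n * (e * b * (k div \<nu>))"
        using nR by simp
      then show ?thesis by simp
    qed
    then have "\<alpha> ^ (e * R * b * k) = \<alpha> ^ (R * (k mod \<nu>) * b * e)" by (rule apow_eq)
    moreover have "(t + (e * R + M0) * b) * k = (t + M0 * b) * k + e * R * b * k"
      by (simp add: algebra_simps)
    ultimately show ?thesis by (simp add: P_pow power_add)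
  qed
  have "ev n v (P (e * R + M0)) = (\<Sum>k<n. v k * P M0 ^ k * \<alpha> ^ (R * (k mod \<nu>) * b * e))"
    unfolding ev_def by (simp add: P_pow key mult.assoc)
  also have "\<dots> = (\<Sum>s<\<nu>. \<Sum>k\<in>{k\<in>{..<n}. k mod \<nu> = s}. v k * P M0 ^ k * \<alpha> ^ (R * (k mod \<nu>) * b * e))"
    by (rule sum.group[symmetric]) (use nu_l in auto)
  also have "\<dots> = (\<Sum>s<\<nu>. \<alpha> ^ (R * s * b * e) * cls v s (P M0))"
    unfolding cls_def by (intro sum.cong refl) (auto simp: sum_distrib_left mult_ac)
  finally show ?thesis .
qed


lemma iR: "i + \<delta> - 1 \<le> R" using ir unfolding R_def by simp
lemma iR2: "i + \<delta> \<le> R" using ir h\<delta> unfolding R_def by simp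
lemma jR: "j + \<delta> - 2 < R" using ir ji h\<delta> unfolding R_def by simp
lemma D_n: "D \<le> n"
proof -
  have "(l + 1) * R \<le> \<nu> * R" using nu_l by (intro mult_le_mono1) simp
  then show ?thesis unfolding D_def using nR iR by (simp add: algebra_simps)
qed

definition "Bl = (\<lambda>(e, u). (l + e) * R + j + u) ` ({1..\<nu> - l - 1} \<times> {..\<delta> - 2})"

lemma S_alt: "S = {..<D} \<union> Bl"
  unfolding S_def Bl_def by auto

lemma blk_lt: "e \<le> \<nu> - l - 1 \<Longrightarrow> u \<le> \<delta> - 2 \<Longrightarrow> (l + e) * R + j + u < n"
proof -
  assume h: "e \<le> \<nu> - l - 1" "u \<le> \<delta> - 2"
  have "(l + e) * R \<le> (\<nu> - 1) * R" using h nu_l by (intro mult_le_mono1) simp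
  moreover have "(\<nu> - 1) * R + R = n"
  proof -
    have "(\<nu> - 1) * R + R = (\<nu> - 1 + 1) * R" by simp
    also have "\<nu> - 1 + 1 = \<nu>" using nu_l by simp
    finally show ?thesis using nR by simp
  qed
  ultimately show ?thesis using jR h h\<delta> by linarith
qed

lemma S_sub: "S \<subseteq> {..<n}"
proof
  fix x assume "x \<in> S"
  then consider "x < D" | e u where "e \<le> \<nu> - l - 1" "u \<le> \<delta> - 2" "x = (l + e) * R + j + u"
    unfolding S_def by blast
  then show "x \<in> {..<n}"
  proof cases
    case 1 then show ?thesis using D_n by simp
  next
    case 2 then show ?thesis using blk_lt by simp
  qed
qed

lemma Bl_inj: "inj_on (\<lambda>(e, u). (l + e) * R + j + u) ({1..\<nu> - l - 1} \<times> {..\<delta> - 2})"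
proof (rule inj_onI)
  fix p p' assume p: "p \<in> {1..\<nu> - l - 1} \<times> {..\<delta> - 2}" "p' \<in> {1..\<nu> - l - 1} \<times> {..\<delta> - 2}"
    and eq: "(\<lambda>(e, u). (l + e) * R + j + u) p = (\<lambda>(e, u). (l + e) * R + j + u) p'"
  obtain e u where pe: "p = (e, u)" by fastforce
  obtain e' u' where pe': "p' = (e', u')" by fastforce
  have h: "u \<le> \<delta> - 2" "u' \<le> \<delta> - 2" using p pe pe' by auto
  have eq2: "(l + e) * R + (j + u) = (l + e') * R + (j + u')" using eq pe pe' by (simp add: add.assoc)
  have a: "j + u < R" "j + u' < R" using h jR h\<delta> by linarith+
  have d: "((l + e) * R + (j + u)) div R = l + e" "((l + e') * R + (j + u')) div R = l + e'"
    using a by auto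
  have m: "((l + e) * R + (j + u)) mod R = j + u" "((l + e') * R + (j + u')) mod R = j + u'"
    using a by auto
  have "l + e = l + e'" using d eq2 by simp
  moreover have "j + u = j + u'" using m eq2 by simp
  ultimately show "p = p'" using pe pe' by simp
qed

lemma card_Bl: "card Bl = (\<nu> - l - 1) * (\<delta> - 1)"
proof -
  have "\<delta> - 1 = Suc (\<delta> - 2)" using h\<delta> by simp
  then show ?thesis unfolding Bl_def using card_image[OF Bl_inj] by simp
qed

lemma Bl_ge: "x \<in> Bl \<Longrightarrow> D \<le> x"
proof -
  assume "x \<in> Bl"
  then obtain e u where "1 \<le> e" "x = (l + e) * R + j + u" unfolding Bl_def by auto
  moreover have "(l + 1) * R \<le> (l + e) * R" using \<open>1 \<le> e\<close> by (intro mult_le_mono1) simp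
  moreover have "(l + 1) * R = l * R + R" by simp
  ultimately show ?thesis unfolding D_def using iR by linarith
qed

lemma card_S: "card S = D + (\<nu> - l - 1) * (\<delta> - 1)"
proof -
  have "{..<D} \<inter> Bl = {}" using Bl_ge by fastforce
  then have "card S = card {..<D} + card Bl" unfolding S_alt
    by (intro card_Un_disjoint) (auto simp: Bl_def)
  then show ?thesis using card_Bl by simp
qed

lemma set_prodI: "x \<in> A \<Longrightarrow> y \<in> B \<Longrightarrow> z = x * y \<Longrightarrow> z \<in> set_prod A B"
  unfolding set_prod_def by blast

lemma Z_eq: "set_prod ({\<alpha> ^ (t + m * b) | m. m \<le> l * R + i}
      \<union> {\<alpha> ^ (t + ((l + e) * R + j) * b) | e. 1 \<le> e \<and> e \<le> \<nu> - l - 1})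
      {\<alpha> ^ (m * b) | m. m \<le> \<delta> - 2} = P ` S" (is "set_prod (?A1 \<union> ?A2) ?B = _")
proof
  have mul: "\<alpha> ^ (t + m * b) * \<alpha> ^ (u * b) = P (m + u)" for m u
    unfolding P_def by (simp add: add_mult_distrib add.assoc power_add)
  show "set_prod (?A1 \<union> ?A2) ?B \<subseteq> P ` S"
  proof
    fix z assume "z \<in> set_prod (?A1 \<union> ?A2) ?B"
    then obtain x y where xy: "z = x * y" "x \<in> ?A1 \<union> ?A2" "y \<in> ?B"
      unfolding set_prod_def by blast
    from xy(3) obtain u where u: "y = \<alpha> ^ (u * b)" "u \<le> \<delta> - 2" by blast
    from xy(2) show "z \<in> P ` S"
    proof
      assume "x \<in> ?A1"
      then obtain m where m: "m \<le> l * R + i" "x = \<alpha> ^ (t + m * b)" by blast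
      have "m + u < D" using m u h\<delta> unfolding D_def by linarith
      then have "m + u \<in> S" unfolding S_def by simp
      moreover have "z = P (m + u)" using xy(1) m(2) u(1) mul by simp
      ultimately show ?thesis by (rule rev_image_eqI)
    next
      assume "x \<in> ?A2"
      then obtain e where e: "1 \<le> e" "e \<le> \<nu> - l - 1" "x = \<alpha> ^ (t + ((l + e) * R + j) * b)" by blast
      have "(l + e) * R + j + u \<in> S" unfolding S_def using e(1,2) u(2) by blast
      moreover have "z = P ((l + e) * R + j + u)" using xy(1) e(3) u(1) mul by simp
      ultimately show ?thesis by (rule rev_image_eqI)
    qed
  qed
  show "P ` S \<subseteq> set_prod (?A1 \<union> ?A2) ?B"
  proof
    fix z assume "z \<in> P ` S"
    then obtain M where M: "M \<in> S" "z = P M" by blast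
    from M(1) consider "M < D" | e u where "1 \<le> e" "e \<le> \<nu> - l - 1" "u \<le> \<delta> - 2" "M = (l + e) * R + j + u"
      unfolding S_def by blast
    then show "z \<in> set_prod (?A1 \<union> ?A2) ?B"
    proof cases
      case 1
      define m where "m = min M (l * R + i)"
      have "M - m \<le> \<delta> - 2" using 1 unfolding m_def D_def by linarith
      then have B: "\<alpha> ^ ((M - m) * b) \<in> ?B" by blast
      have "\<alpha> ^ (t + m * b) \<in> ?A1 \<union> ?A2" unfolding m_def by auto
      moreover note B
      moreover have "z = \<alpha> ^ (t + m * b) * \<alpha> ^ ((M - m) * b)"
        using M(2) mul[of m "M - m"] unfolding m_def by simp
      ultimately show ?thesis by (rule set_prodI)
    next
      case 2
      have "\<alpha> ^ (t + ((l + e) * R + j) * b) \<in> ?A1 \<union> ?A2" using 2 by blast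
      moreover have "\<alpha> ^ (u * b) \<in> ?B" using 2 by blast
      moreover have "z = \<alpha> ^ (t + ((l + e) * R + j) * b) * \<alpha> ^ (u * b)"
        using M(2) mul 2 by (simp add: add.assoc)
      ultimately show ?thesis by (rule set_prodI)
    qed
  qed
qed

lemma card_Z: "card (P ` S) = card S"
proof (rule card_image, rule inj_onI)
  fix x y assume "x \<in> S" "y \<in> S" "P x = P y"
  then show "x = y" using P_inj S_sub by blast
qed

lemma Z_roots: "\<forall>z\<in>P ` S. z ^ n = 1" using P_root by auto

lemma ev_P: "ev n v (P M) = (\<Sum>k<n. (v k * \<alpha> ^ (t * k)) * (\<alpha> ^ (k * b)) ^ M)"
  unfolding ev_def P_pow by (intro sum.cong refl)
    (simp add: power_add power_mult[symmetric] algebra_simps)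

lemma weight_ge:
  assumes v: "v \<in> Cp n (P ` S)" and v0: "v \<noteq> 0"
  shows "D + 1 \<le> card {k. k < n \<and> v k \<noteq> 0}"
proof (rule ccontr)
  define K where "K = {k. k < n \<and> v k \<noteq> 0}"
  assume "\<not> D + 1 \<le> card {k. k < n \<and> v k \<noteq> 0}"
  then have cK: "card K \<le> D" unfolding K_def by simp
  have vz: "\<forall>k\<ge>n. v k = 0" "\<forall>z\<in>P ` S. ev n v z = 0" using v unfolding Cp_def by auto
  have "\<exists>k. v k \<noteq> 0" using v0 by (auto simp: fun_eq_iff)
  then obtain k0 where "v k0 \<noteq> 0" by blast
  moreover have "k0 < n" using vz(1) \<open>v k0 \<noteq> 0\<close> not_le by blast
  ultimately have k0: "k0 \<in> K" unfolding K_def by simp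
  have fK: "finite K" unfolding K_def by simp
  have hs: "\<forall>M<card K. (\<Sum>k\<in>K. (v k * \<alpha> ^ (t * k)) * (\<alpha> ^ (k * b)) ^ M) = 0"
  proof (intro allI impI)
    fix M assume "M < card K"
    then have "M \<in> S" using cK unfolding S_def by auto
    then have "ev n v (P M) = 0" using vz by auto
    moreover have "ev n v (P M) = (\<Sum>k\<in>K. (v k * \<alpha> ^ (t * k)) * (\<alpha> ^ (k * b)) ^ M)"
      unfolding ev_P K_def by (rule sum.mono_neutral_right) auto
    ultimately show "(\<Sum>k\<in>K. (v k * \<alpha> ^ (t * k)) * (\<alpha> ^ (k * b)) ^ M) = 0" by simp
  qed
  have ib: "inj_on (\<lambda>k. \<alpha> ^ (k * b)) K"
    by (rule inj_onI) (use b_inj in \<open>auto simp: K_def\<close>)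
  have "v k0 * \<alpha> ^ (t * k0) = 0"
    using vander[where y="\<lambda>k. v k * \<alpha> ^ (t * k)" and x="\<lambda>k. \<alpha> ^ (k * b)", OF fK ib hs k0] by simp
  then show False using k0 a0 unfolding K_def by simp
qed


lemma Rpos: "0 < R" using R2 by simp
lemma nu_pos: "0 < \<nu>" using nu_l by simp

lemma in_S_eRju: "e < \<nu> \<Longrightarrow> u \<le> \<delta> - 2 \<Longrightarrow> e * R + (j + u) \<in> S"
proof -
  assume e: "e < \<nu>" and u: "u \<le> \<delta> - 2"
  show ?thesis
  proof (cases "e \<le> l")
    case True
    then have "e * R \<le> l * R" by (rule mult_le_mono1)
    then have "e * R + (j + u) < D" unfolding D_def using ji u h\<delta> by linarith
    then show ?thesis unfolding S_def by simp
  next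
    case False
    define e' where "e' = e - l"
    have "1 \<le> e'" "e' \<le> \<nu> - l - 1" "e = l + e'" using False e unfolding e'_def by auto
    then have "(l + e') * R + j + u \<in> S" unfolding S_def using u by blast
    then show ?thesis using \<open>e = l + e'\<close> by (simp add: add.assoc)
  qed
qed

lemma xs_inj: "inj_on (\<lambda>s. \<alpha> ^ (R * s * b)) {..<\<nu>}"
proof (rule inj_onI)
  fix s s' assume h: "s \<in> {..<\<nu>}" "s' \<in> {..<\<nu>}" "\<alpha> ^ (R * s * b) = \<alpha> ^ (R * s' * b)"
  have "R * s < R * \<nu>" "R * s' < R * \<nu>" using h(1,2) Rpos by (auto intro: mult_strict_left_mono)
  then have "R * s < n" "R * s' < n" using nR by (metis mult.commute)+
  then have "R * s = R * s'" using b_inj h(3) by blast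
  then show "s = s'" using Rpos by simp
qed

lemma cls_zero:
  assumes c: "c \<in> Cp n (P ` S)" and u: "u \<le> \<delta> - 2" and s: "s < \<nu>"
  shows "cls c s (P (j + u)) = 0"
proof -
  have hs: "\<forall>e<card {..<\<nu>}. (\<Sum>s\<in>{..<\<nu>}. cls c s (P (j + u)) * (\<alpha> ^ (R * s * b)) ^ e) = 0"
  proof (intro allI impI)
    fix e assume "e < card {..<\<nu>}"
    then have "e < \<nu>" by simp
    then have "e * R + (j + u) \<in> S" using in_S_eRju u by blast
    then have "ev n c (P (e * R + (j + u))) = 0" using c unfolding Cp_def by auto
    moreover have "(\<Sum>s\<in>{..<\<nu>}. cls c s (P (j + u)) * (\<alpha> ^ (R * s * b)) ^ e)
        = (\<Sum>s<\<nu>. \<alpha> ^ (R * s * b * e) * cls c s (P (j + u)))"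
      by (intro sum.cong refl) (simp only: power_mult[symmetric] mult.commute)
    ultimately show "(\<Sum>s\<in>{..<\<nu>}. cls c s (P (j + u)) * (\<alpha> ^ (R * s * b)) ^ e) = 0"
      unfolding decomp by simp
  qed
  show ?thesis
    using vander[where y="\<lambda>s. cls c s (P (j + u))" and x="\<lambda>s. \<alpha> ^ (R * s * b)", OF _ xs_inj hs] s
    by simp
qed

lemma Ppow_split: "P (j + u) ^ k = (\<alpha> ^ (t * k) * (\<alpha> ^ (k * b)) ^ j) * (\<alpha> ^ (k * b)) ^ u"
proof -
  have "(t + (j + u) * b) * k = t * k + k * b * j + k * b * u" by (simp add: algebra_simps)
  then show ?thesis unfolding P_pow by (simp add: power_add power_mult mult.assoc)
qed

lemma local_weight:
  assumes c: "c \<in> Cp n (P ` S)" and s0: "s0 < \<nu>" and k1: "k1 < n" "k1 mod \<nu> = s0" "c k1 \<noteq> 0"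
  shows "\<delta> \<le> card {k. k < n \<and> k mod \<nu> = s0 \<and> c k \<noteq> 0}"
proof (rule ccontr)
  define K where "K = {k. k < n \<and> k mod \<nu> = s0 \<and> c k \<noteq> 0}"
  assume "\<not> \<delta> \<le> card {k. k < n \<and> k mod \<nu> = s0 \<and> c k \<noteq> 0}"
  then have cK: "card K < \<delta>" unfolding K_def by simp
  have fK: "finite K" unfolding K_def by simp
  have k1K: "k1 \<in> K" unfolding K_def using k1 by simp
  have hs: "\<forall>u<card K. (\<Sum>k\<in>K. (c k * (\<alpha> ^ (t * k) * (\<alpha> ^ (k * b)) ^ j)) * (\<alpha> ^ (k * b)) ^ u) = 0"
  proof (intro allI impI)
    fix u assume "u < card K"
    then have u: "u \<le> \<delta> - 2" using cK by linarith
    have "cls c s0 (P (j + u)) = 0" using cls_zero[OF c u s0] .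
    moreover have "cls c s0 (P (j + u)) = (\<Sum>k\<in>K. c k * P (j + u) ^ k)"
      unfolding cls_def K_def by (rule sum.mono_neutral_right) auto
    ultimately show "(\<Sum>k\<in>K. (c k * (\<alpha> ^ (t * k) * (\<alpha> ^ (k * b)) ^ j)) * (\<alpha> ^ (k * b)) ^ u) = 0"
      unfolding Ppow_split by (simp add: mult.assoc)
  qed
  have ib: "inj_on (\<lambda>k. \<alpha> ^ (k * b)) K"
    by (rule inj_onI) (use b_inj in \<open>auto simp: K_def\<close>)
  have "c k1 * (\<alpha> ^ (t * k1) * (\<alpha> ^ (k1 * b)) ^ j) = 0"
    using vander[where y="\<lambda>k. c k * (\<alpha> ^ (t * k) * (\<alpha> ^ (k * b)) ^ j)" and x="\<lambda>k. \<alpha> ^ (k * b)", OF fK ib hs k1K]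
    by simp
  then show False using k1 a0 by simp
qed


definition "T = (\<lambda>(s, m). s + \<nu> * m) ` ({..<l} \<times> {..<R} \<union> {l} \<times> {..<i + \<delta>})"
definition "Cov = (\<lambda>(e, u). e * R + j + u) ` ({..l} \<times> {..\<delta> - 2})"
definition "E = {..<D} - Cov"
definition "I1 = (\<lambda>(s, u). (Some s, P (j + u))) ` ({..l} \<times> {..\<delta> - 2})"
definition "I2 = (\<lambda>M. (None :: nat option, P M)) ` E"
definition "I = I1 \<union> I2"
definition "Phi c = (\<lambda>(oo, p). case oo of None \<Rightarrow> ev n c p | Some s \<Rightarrow> cls c s p)"

lemma T_inj: "inj_on (\<lambda>(s, m). s + \<nu> * m) ({..<l} \<times> {..<R} \<union> {l} \<times> {..<i + \<delta>})"
proof (rule inj_onI)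
  fix p p' assume p: "p \<in> {..<l} \<times> {..<R} \<union> {l} \<times> {..<i + \<delta>}" "p' \<in> {..<l} \<times> {..<R} \<union> {l} \<times> {..<i + \<delta>}"
    and eq: "(\<lambda>(s, m). s + \<nu> * m) p = (\<lambda>(s, m). s + \<nu> * m) p'"
  obtain s m where pe: "p = (s, m)" by fastforce
  obtain s' m' where pe': "p' = (s', m')" by fastforce
  have "s < \<nu>" "s' < \<nu>" using p pe pe' nu_l by auto
  moreover have "s + \<nu> * m = s' + \<nu> * m'" using eq pe pe' by simp
  ultimately have ss: "s = s'"
    by (metis mod_mult_self2 mod_less mult.commute)
  then have "\<nu> * m = \<nu> * m'" using \<open>s + \<nu> * m = s' + \<nu> * m'\<close> by simp
  then have "m = m'" using nu_pos by simp
  note ss this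
  then show "p = p'" using pe pe' by simp
qed

lemma card_T: "card T = D + 1"
proof -
  have "card T = card ({..<l} \<times> {..<R} \<union> {l} \<times> {..<i + \<delta>})"
    unfolding T_def by (rule card_image[OF T_inj])
  also have "\<dots> = l * R + (i + \<delta>)" by (subst card_Un_disjoint) (auto simp: card_cartesian_product)
  finally show ?thesis unfolding D_def using h\<delta> by simp
qed

lemma T_props: "k \<in> T \<Longrightarrow> k < n \<and> k mod \<nu> \<le> l"
proof -
  assume "k \<in> T"
  then obtain s m where sm: "k = s + \<nu> * m" "s \<le> l" "m < R"
    unfolding T_def using iR2 by auto
  have s: "s < \<nu>" using sm nu_l by simp
  have "s + \<nu> * m < \<nu> + \<nu> * m" using s by simp
  also have "\<dots> = \<nu> * (m + 1)" by simp
  also have "\<dots> \<le> \<nu> * R" using sm by (intro mult_le_mono2) simp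
  finally have "k < n" using sm nR by simp
  moreover have "k mod \<nu> = s" using sm s by simp
  ultimately show ?thesis using sm by simp
qed

lemma Cov_inj: "inj_on (\<lambda>(e, u). e * R + j + u) ({..l} \<times> {..\<delta> - 2})"
proof (rule inj_onI)
  fix p p' assume p: "p \<in> {..l} \<times> {..\<delta> - 2}" "p' \<in> {..l} \<times> {..\<delta> - 2}"
    and eq: "(\<lambda>(e, u). e * R + j + u) p = (\<lambda>(e, u). e * R + j + u) p'"
  obtain e u where pe: "p = (e, u)" by fastforce
  obtain e' u' where pe': "p' = (e', u')" by fastforce
  have h: "u \<le> \<delta> - 2" "u' \<le> \<delta> - 2" using p pe pe' by auto
  have eq2: "e * R + (j + u) = e' * R + (j + u')" using eq pe pe' by (simp add: add.assoc)
  have a: "j + u < R" "j + u' < R" using h jR h\<delta> by linarith+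
  have d: "(e * R + (j + u)) div R = e" "(e' * R + (j + u')) div R = e'" using a by auto
  have m: "(e * R + (j + u)) mod R = j + u" "(e' * R + (j + u')) mod R = j + u'" using a by auto
  have "e = e'" using d eq2 by simp
  moreover have "j + u = j + u'" using m eq2 by simp
  ultimately show "p = p'" using pe pe' by simp
qed

lemma Cov_sub: "Cov \<subseteq> {..<D}"
proof
  fix x assume "x \<in> Cov"
  then obtain e u where eu: "e \<le> l" "u \<le> \<delta> - 2" "x = e * R + j + u" unfolding Cov_def by auto
  have "e * R \<le> l * R" using eu(1) by (rule mult_le_mono1)
  then have "x < D" unfolding D_def using eu ji h\<delta> by linarith
  then show "x \<in> {..<D}" by simp
qed

lemma card_Cov: "card Cov = (l + 1) * (\<delta> - 1)"
proof -
  have "\<delta> - 1 = Suc (\<delta> - 2)" using h\<delta> by simp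
  then show ?thesis unfolding Cov_def using card_image[OF Cov_inj] by (simp add: card_cartesian_product)
qed

lemma card_I: "card I \<le> D"
proof -
  have "card I \<le> card I1 + card I2"
    unfolding I_def by (rule card_Un_le)
  also have "\<dots> \<le> card ({..l} \<times> {..\<delta> - 2}) + card E"
    unfolding I1_def I2_def by (intro add_mono card_image_le) (auto simp: E_def)
  also have "card ({..l} \<times> {..\<delta> - 2}) = (l + 1) * (\<delta> - 1)"
    using card_image[OF Cov_inj] card_Cov unfolding Cov_def by simp
  also have "card E = D - (l + 1) * (\<delta> - 1)"
    unfolding E_def using card_Diff_subset[OF _ Cov_sub] card_Cov by (simp add: Cov_def)
  also have "(l + 1) * (\<delta> - 1) + (D - (l + 1) * (\<delta> - 1)) = D"
    using card_Cov Cov_sub card_mono[OF _ Cov_sub] by simp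
  finally show ?thesis .
qed

lemma ev_diff: "ev n (f - g) p = ev n f p - ev n g (p :: 'a)"
  unfolding ev_def by (simp add: sum_subtractf left_diff_distrib)

lemma cls_diff: "cls (f - g) s p = cls f s p - cls g s (p :: 'a)"
  unfolding cls_def by (simp add: left_diff_distrib sum_subtractf)

lemma Phi_diff: "Phi (f - g) x = Phi f x - Phi g (x :: nat option \<times> 'a)"
  unfolding Phi_def by (cases x) (auto simp: ev_diff cls_diff split: option.splits)


lemma card_field: "2 \<le> card (UNIV :: 'a set)"
proof -
  have "card {0 :: 'a, 1} = 2" by simp
  moreover have "card {0 :: 'a, 1} \<le> card (UNIV :: 'a set)" by (rule card_mono) auto
  ultimately show ?thesis by simp
qed

lemma M_decomp:
  assumes M: "M \<in> S" "M \<notin> E"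
  obtains e u where "e < \<nu>" "u \<le> \<delta> - 2" "M = e * R + (j + u)"
proof -
  from M(1) have "M \<in> {..<D} \<or> M \<in> Bl" unfolding S_alt by blast
  then show ?thesis
  proof
    assume "M \<in> {..<D}"
    then have "M \<in> Cov" using M(2) unfolding E_def by blast
    then obtain e u where eu: "e \<le> l" "u \<le> \<delta> - 2" "M = e * R + j + u" unfolding Cov_def by auto
    have "e < \<nu>" using eu nu_l by simp
    then show ?thesis using that eu by (simp add: add.assoc)
  next
    assume "M \<in> Bl"
    then obtain e u where eu: "1 \<le> e" "e \<le> \<nu> - l - 1" "u \<le> \<delta> - 2" "M = (l + e) * R + j + u"
      unfolding Bl_def by auto
    have "l + e < \<nu>" using eu nu_l by simp
    then show ?thesis using that eu by (simp add: add.assoc)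
  qed
qed

lemma exists_low: "\<exists>c. c \<in> Cp n (P ` S) \<and> c \<noteq> 0 \<and> card {k. k < n \<and> c k \<noteq> 0} \<le> D + 1"
proof -
  define Psi where "Psi g = (\<lambda>k. if k \<in> T then g k else (0::'a))" for g :: "nat \<Rightarrow> 'a"
  define F where "F g = restrict (Phi (Psi g)) I" for g
  define X where "X = PiE T (\<lambda>_. UNIV :: 'a set)"
  define q where "q = card (UNIV :: 'a set)"
  have finT: "finite T" unfolding T_def by simp
  have finI: "finite I" unfolding I_def I1_def I2_def E_def by simp
  have q2: "2 \<le> q" unfolding q_def by (rule card_field)
  have cX: "card X = q ^ card T" unfolding X_def q_def using finT by (simp add: card_PiE)
  have FX: "F ` X \<subseteq> PiE I (\<lambda>_. UNIV :: 'a set)" by (auto simp: F_def)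
  have "card (F ` X) \<le> card (PiE I (\<lambda>_. UNIV :: 'a set))"
    by (rule card_mono[OF _ FX]) (simp add: finite_PiE finI)
  also have "\<dots> = q ^ card I" unfolding q_def using finI by (simp add: card_PiE)
  also have "\<dots> < q ^ card T" using card_I card_T q2 by (intro power_strict_increasing) auto
  finally have "card (F ` X) < card X" using cX by simp
  then have "\<not> inj_on F X" using card_image by fastforce
  then obtain g1 g2 where g: "g1 \<in> X" "g2 \<in> X" "g1 \<noteq> g2" "F g1 = F g2"
    unfolding inj_on_def by blast
  define c where "c = Psi g1 - Psi g2"
  have "\<exists>k\<in>T. g1 k \<noteq> g2 k"
  proof (rule ccontr)
    assume "\<not> (\<exists>k\<in>T. g1 k \<noteq> g2 k)"
    then have "g1 = g2" using g(1,2) unfolding X_def by (intro extensionalityI[of _ T]) (auto simp: PiE_iff)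
    then show False using g(3) by simp
  qed
  then obtain k where k: "k \<in> T" "g1 k \<noteq> g2 k" by blast
  have c0: "c \<noteq> 0"
  proof
    assume "c = 0"
    then have "c k = 0" by simp
    then show False using k unfolding c_def Psi_def by simp
  qed
  have supp: "c k \<noteq> 0 \<Longrightarrow> k \<in> T" for k unfolding c_def Psi_def by (cases "k \<in> T") auto
  have phi0: "Phi c x = 0" if "x \<in> I" for x
  proof -
    have "F g1 x = F g2 x" using g(4) by simp
    then have "Phi (Psi g1) x = Phi (Psi g2) x" using that unfolding F_def by simp
    then show ?thesis unfolding c_def Phi_diff by simp
  qed
  have wt: "card {k. k < n \<and> c k \<noteq> 0} \<le> D + 1"
  proof -
    have "{k. k < n \<and> c k \<noteq> 0} \<subseteq> T" using supp by blast
    then show ?thesis using card_mono[OF finT] card_T by metis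
  qed
  have cl0: "cls c s p = 0" if "l < s" for s p
    unfolding cls_def
  proof (rule sum.neutral, rule ballI)
    fix k assume "k \<in> {k \<in> {..<n}. k mod \<nu> = s}"
    then have "k \<notin> T" using T_props that by fastforce
    then show "c k * p ^ k = 0" using supp by fastforce
  qed
  have "c \<in> Cp n (P ` S)"
    unfolding Cp_def
  proof (intro CollectI conjI allI impI ballI)
    fix k assume "n \<le> k"
    then have "k \<notin> T" using T_props by fastforce
    then show "c k = 0" using supp by blast
  next
    fix z assume "z \<in> P ` S"
    then obtain M where M: "M \<in> S" "z = P M" by blast
    show "ev n c z = 0"
    proof (cases "M \<in> E")
      case True
      then have "(None, P M) \<in> I" unfolding I_def I2_def by blast
      then have "Phi c (None, P M) = 0" by (rule phi0)
      then show ?thesis using M unfolding Phi_def by simp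
    next
      case False
      then obtain e u where eu: "e < \<nu>" "u \<le> \<delta> - 2" "M = e * R + (j + u)"
        using M_decomp M(1) by blast
      have "cls c s (P (j + u)) = 0" for s
      proof (cases "s \<le> l")
        case True
        then have "(Some s, P (j + u)) \<in> I" unfolding I_def I1_def using eu(2) by (intro UnI1 rev_image_eqI[of "(s, u)"]) auto
        then have "Phi c (Some s, P (j + u)) = 0" by (rule phi0)
        then show ?thesis unfolding Phi_def by simp
      next
        case False
        then show ?thesis using cl0 by simp
      qed
      then show ?thesis using M eu decomp by simp
    qed
  qed
  then show ?thesis using c0 wt by blast
qed


abbreviation "Cd \<equiv> Cp n (P ` S)"

lemma Cd_diff: "x \<in> Cd \<Longrightarrow> y \<in> Cd \<Longrightarrow> x - y \<in> Cd"
  unfolding Cp_def by (auto simp: ev_diff)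

lemma Cd_zero: "0 \<in> Cd"
  unfolding Cp_def ev_def by simp

lemma hd_eq: "hamming_dist n x y = card {k. k < n \<and> (x - y) k \<noteq> (0::'a)}"
  unfolding hamming_dist_def by (simp add: right_minus_eq)

lemma min_dist_Cd: "min_dist n Cd = D + 1"
  unfolding min_dist_def
proof (rule Min_eqI)
  have hle: "hamming_dist n x y \<le> n" for x y :: "nat \<Rightarrow> 'a"
  proof -
    have "card {k. k < n \<and> x k \<noteq> y k} \<le> card {..<n}" by (rule card_mono) auto
    then show ?thesis unfolding hamming_dist_def by simp
  qed
  show "finite {hamming_dist n x y |x y. x \<in> Cd \<and> y \<in> Cd \<and> x \<noteq> y}"
  proof (rule finite_subset[of _ "{..n}"])
    show "{hamming_dist n x y |x y. x \<in> Cd \<and> y \<in> Cd \<and> x \<noteq> y} \<subseteq> {..n}"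
      using hle by auto
  qed simp
next
  fix d assume "d \<in> {hamming_dist n x y |x y. x \<in> Cd \<and> y \<in> Cd \<and> x \<noteq> y}"
  then obtain x y where xy: "x \<in> Cd" "y \<in> Cd" "x \<noteq> y" "d = hamming_dist n x y" by blast
  have "x - y \<in> Cd" using Cd_diff xy by blast
  moreover have "x - y \<noteq> 0" using xy(3) by simp
  ultimately have "D + 1 \<le> card {k. k < n \<and> (x - y) k \<noteq> 0}" by (rule weight_ge)
  then show "D + 1 \<le> d" using xy(4) hd_eq[of x y] by simp
next
  obtain c where c: "c \<in> Cd" "c \<noteq> 0" "card {k. k < n \<and> c k \<noteq> 0} \<le> D + 1"
    using exists_low by blast
  have "D + 1 \<le> card {k. k < n \<and> c k \<noteq> 0}" by (rule weight_ge[OF c(1,2)])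
  then have h: "hamming_dist n c 0 = D + 1" using c(3) hd_eq[of c 0] by simp
  have "hamming_dist n c 0 \<in> {hamming_dist n x y |x y. x \<in> Cd \<and> y \<in> Cd \<and> x \<noteq> y}"
    using c(1,2) Cd_zero by blast
  then show "D + 1 \<in> {hamming_dist n x y |x y. x \<in> Cd \<and> y \<in> Cd \<and> x \<noteq> y}"
    unfolding h .
qed

lemma LRC_Cd: "is_LRC n Cd r \<delta>"
  unfolding is_LRC_def has_locality_def
proof (intro allI impI)
  fix k0 assume k0: "k0 < n"
  define s0 where "s0 = k0 mod \<nu>"
  define S0 where "S0 = {k. k < n \<and> k mod \<nu> = s0}"
  have s0: "s0 < \<nu>" unfolding s0_def using nu_pos by simp
  have "S0 \<subseteq> (\<lambda>m. s0 + \<nu> * m) ` {..<R}"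
  proof
    fix k assume "k \<in> S0"
    then have k: "k < n" "k mod \<nu> = s0" unfolding S0_def by auto
    have "k div \<nu> < R" using k(1) nR by (simp add: less_mult_imp_div_less mult.commute)
    moreover have "k = s0 + \<nu> * (k div \<nu>)" using k(2) mod_mult_div_eq[of k \<nu>] by simp
    ultimately show "k \<in> (\<lambda>m. s0 + \<nu> * m) ` {..<R}" by blast
  qed
  then have "card S0 \<le> card ((\<lambda>m. s0 + \<nu> * m) ` {..<R})" by (intro card_mono) auto
  also have "\<dots> \<le> R" using card_image_le[of "{..<R}" "\<lambda>m. s0 + \<nu> * m"] by simp
  finally have cS0: "card S0 \<le> R" .
  have md: "min_dist_ge n (puncture S0 Cd) \<delta>"
    unfolding min_dist_ge_def
  proof (intro ballI impI)
    fix x y assume x: "x \<in> puncture S0 Cd" and y: "y \<in> puncture S0 Cd" and xy: "x \<noteq> y"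
    obtain c1 where c1: "c1 \<in> Cd" "x = (\<lambda>k. if k \<in> S0 then c1 k else 0)" using x unfolding puncture_def by blast
    obtain c2 where c2: "c2 \<in> Cd" "y = (\<lambda>k. if k \<in> S0 then c2 k else 0)" using y unfolding puncture_def by blast
    define c where "c = c1 - c2"
    have cC: "c \<in> Cd" unfolding c_def using Cd_diff c1 c2 by blast
    have eqs: "{k. k < n \<and> x k \<noteq> y k} = {k. k < n \<and> k mod \<nu> = s0 \<and> c k \<noteq> 0}"
      unfolding c1(2) c2(2) c_def S0_def by auto
    obtain k1 where "x k1 \<noteq> y k1" using xy by (auto simp: fun_eq_iff)
    then have k1: "k1 < n" "k1 mod \<nu> = s0" "c k1 \<noteq> 0" using c1(2) c2(2) unfolding c_def S0_def
      by (auto split: if_splits)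
    show "\<delta> \<le> hamming_dist n x y" unfolding hamming_dist_def eqs
      using local_weight[OF cC s0 k1] .
  qed
  show "\<exists>S. S \<subseteq> {0..<n} \<and> k0 \<in> S \<and> card S \<le> r + \<delta> - 1 \<and> min_dist_ge n (puncture S Cd) \<delta>"
    using cS0 md k0 unfolding S0_def s0_def R_def by (intro exI[of _ S0]) (auto simp: S0_def s0_def)
qed

lemma dim_Cd: "code_dim Cd = (\<nu> - l) * r - i"
proof -
  have fS: "finite S" using S_sub finite_subset by blast
  have "card S \<le> n" using card_mono[OF _ S_sub] by simp
  then have "code_dim Cd = n - card (P ` S)"
    using dim_Cp[OF n_pos _ Z_roots] card_Z fS by simp
  also have "\<dots> = n - card S" using card_Z by simp
  finally have cd: "code_dim Cd = n - (D + (\<nu> - l - 1) * (\<delta> - 1))" using card_S by simp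
  define w where "w = \<nu> - l - 1"
  have w: "\<nu> = l + 1 + w" using nu_l unfolding w_def by simp
  define d1 where "d1 = \<delta> - 1"
  have d1: "\<delta> = d1 + 1" using h\<delta> unfolding d1_def by simp
  have R: "R = r + d1" unfolding R_def d1_def using h\<delta> by simp
  have e1: "D + (\<nu> - l - 1) * (\<delta> - 1) = l * (r + d1) + i + d1 + w * d1"
    unfolding D_def R[symmetric] using w d1 by simp
  have e2: "n = (l * (r + d1) + i + d1 + w * d1) + (r + w * r - i)"
  proof -
    have "n = (l + 1 + w) * (r + d1)" using nR w R by simp
    then show ?thesis using ir by (simp add: algebra_simps)
  qed
  have e3: "(\<nu> - l) * r - i = r + w * r - i" using w by (simp add: algebra_simps)
  show ?thesis unfolding cd e1 e3 by (subst e2) simp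
qed


lemma ceil_k: "\<lceil>real ((\<nu> - l) * r - i) / real r\<rceil> = int (\<nu> - l)"
proof (rule ceiling_unique)
  have ile: "i \<le> (\<nu> - l) * r" using ir nu_l
    by (metis Nat.le_diff_conv2 add.commute add_leD1 le_add2 less_imp_le_nat mult_le_mono1 mult_1 order_trans one_add_one add_leE)
  have rp: "0 < real r" using hr by simp
  have k: "real ((\<nu> - l) * r - i) = real (\<nu> - l) * real r - real i" using ile by (simp add: of_nat_diff)
  have q: "real ((\<nu> - l) * r - i) / real r = real (\<nu> - l) - real i / real r"
    unfolding k using rp by (simp add: field_simps)
  have "real i / real r < 1" using ir rp by simp
  then show "real_of_int (int (\<nu> - l)) - 1 < real ((\<nu> - l) * r - i) / real r" unfolding q by simp
  have "0 \<le> real i / real r" by simp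
  then show "real ((\<nu> - l) * r - i) / real r \<le> real_of_int (int (\<nu> - l))" unfolding q by simp
qed

lemma optimal_Cd: "optimal_LRC n Cd r \<delta>"
  unfolding optimal_LRC_def
proof (intro conjI)
  show "is_LRC n Cd r \<delta>" by (rule LRC_Cd)
  have ile: "i \<le> (\<nu> - l) * r" using ir nu_l
    by (metis Nat.le_diff_conv2 add.commute add_leD1 le_add2 less_imp_le_nat mult_le_mono1 mult_1 order_trans one_add_one add_leE)
  have i1: "int ((\<nu> - l) * r - i) = int (\<nu> - l) * int r - int i" using ile by (simp add: of_nat_diff)
  have i2: "int (\<nu> - l) = int \<nu> - int l" using nu_l by simp
  have i3: "int D = int l * int R + int i + int \<delta> - 1" unfolding D_def using h\<delta> by simp
  have i4: "int R = int r + int \<delta> - 1" unfolding R_def using h\<delta> by simp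
  have i5: "int n = int \<nu> * int R" using nR by (metis of_nat_mult)
  show "int (min_dist n Cd) = int n - int (code_dim Cd)
        - (\<lceil>real (code_dim Cd) / real r\<rceil> - 1) * (int \<delta> - 1) + 1"
    unfolding min_dist_Cd dim_Cd ceil_k i1 i2 i5 of_nat_add i3 i4 by (simp add: algebra_simps)
qed

end

theorem corollary4p2:
  fixes \<alpha> :: "'a::{finite,field}"
    and n r \<delta> b t i l j :: nat
  assumes hn: "n dvd card (UNIV :: 'a set) - 1"
    and h\<alpha>: "primitive_root_of_unity n \<alpha>"
    and hr: "1 \<le> r" and h\<delta>: "2 \<le> \<delta>"
    and hdiv: "(r + \<delta> - 1) dvd n"
    and hb: "0 < b" and hgcd: "gcd b n = 1"
    and ht: "t \<le> n - 1"
    and hi: "i \<le> r - 1"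
    and hlj: "(l + 3 \<le> n div (r + \<delta> - 1) \<and> j \<le> i) \<or> (l + 2 = n div (r + \<delta> - 1) \<and> j = i)"
  shows "let \<nu> = n div (r + \<delta> - 1);
             B = {\<alpha> ^ (m * b) | m. m \<le> \<delta> - 2};
             A = {\<alpha> ^ (t + m * b) | m. m \<le> l * (r + \<delta> - 1) + i}
                 \<union> {\<alpha> ^ (t + ((l + e) * (r + \<delta> - 1) + j) * b) | e. 1 \<le> e \<and> e \<le> \<nu> - l - 1};
             C = cyclic_code n (set_prod A B)
         in optimal_LRC n C r \<delta>
            \<and> code_dim C = (\<nu> - l) * r - i
            \<and> min_dist n C = \<delta> + i + l * (r + \<delta> - 1)"
proof -
  interpret L: LRC \<alpha> n r \<delta> b t i l j
    by unfold_locales (use h\<alpha> hr h\<delta> hdiv hgcd hi hlj in auto)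
  have Zeq: "set_prod ({\<alpha> ^ (t + m * b) | m. m \<le> l * (r + \<delta> - 1) + i}
      \<union> {\<alpha> ^ (t + ((l + e) * (r + \<delta> - 1) + j) * b) | e. 1 \<le> e \<and> e \<le> n div (r + \<delta> - 1) - l - 1})
      {\<alpha> ^ (m * b) | m. m \<le> \<delta> - 2} = L.P ` L.S"
    using L.Z_eq unfolding L.R_def L.\<nu>_def .
  have fZ: "finite (L.P ` L.S)" using L.S_sub finite_subset by blast
  have C: "cyclic_code n (L.P ` L.S) = Cp n (L.P ` L.S)"
    by (rule cyc_eq[OF L.n_pos fZ L.Z_roots])
  have d: "L.D + 1 = \<delta> + i + l * (r + \<delta> - 1)" unfolding L.D_def L.R_def using h\<delta> by simp
  show ?thesis unfolding Let_def Zeq C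
    using L.optimal_Cd L.dim_Cd L.min_dist_Cd d unfolding L.R_def L.\<nu>_def by simp
qed

end
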